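(* Let $0<p<1$ and let $P_1,\ldots,P_n,Q\in\mathbb{R}^n$ with $P_1,\ldots,P_n$ linearly independent. If $M\in p\text{-conv}\{P_1,\ldots,P_n,Q,0\}$, then there exist $P_{i_1},\ldots,P_{i_n}\in\{P_1,\ldots,P_n,Q\}$ such that $M\in p\text{-conv}\{P_{i_1},\ldots,P_{i_n},0\}$.
   Context: Let $0<p<1$. A set $B\subseteq \mathbb{R}^n$ is called $p$-convex if $\lambda x+\mu y\in B$ whenever $x,y\in B$ and $\lambda,\mu\ge 0$ with $\lambda^p+\mu^p=1$. For $A\subseteq \mathbb{R}^n$, the $p$-convex hull $p\text{-conv}(A)$ is the intersection of all $p$-convex subsets of $\mathbb{R}^n$ containing $A$. *)

theory Defs
  imports "HOL-Analysis.Analysis"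
begin

definition p_convex :: "real \<Rightarrow> ('a::real_vector) set \<Rightarrow> bool" where
  "p_convex p B \<longleftrightarrow>
     (\<forall>x\<in>B. \<forall>y\<in>B. \<forall>a b. a \<ge> 0 \<and> b \<ge> 0 \<and> a powr p + b powr p = 1
        \<longrightarrow> a *\<^sub>R x + b *\<^sub>R y \<in> B)"

definition p_conv :: "real \<Rightarrow> ('a::real_vector) set \<Rightarrow> 'a set" where
  "p_conv p A = \<Inter>{B. p_convex p B \<and> A \<subseteq> B}"

end

theory Submission
  imports Defs
begin

lemma tangent_powr:
  fixes x p :: real assumes "0 \<le> x" "0 < p" "p \<le> 1"
  shows "x powr p \<le> p * x + (1 - p)"
proof (cases "x = 0")
  case True then show ?thesis using assms by simp
next
  case False
  then have "x powr p * 1 powr (1-p) \<le> p * x + (1-p) * 1"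
    using assms by (intro Youngs_inequality_0) auto
  then show ?thesis by simp
qed

lemma concave_powr:
  fixes a b t p :: real assumes "0 \<le> a" "0 \<le> b" "0 \<le> t" "t \<le> 1" "0 < p" "p \<le> 1"
  shows "t * a powr p + (1 - t) * b powr p \<le> (t * a + (1 - t) * b) powr p"
proof -
  define m where "m = t * a + (1 - t) * b"
  have m0: "m \<ge> 0" using assms unfolding m_def by simp
  show ?thesis
  proof (cases "m = 0")
    case True
    then have "t * a = 0" "(1-t) * b = 0" using assms unfolding m_def
      by (smt (verit) mult_nonneg_nonneg)+
    then show ?thesis using assms True m_def by auto
  next
    case False
    then have mp: "m > 0" using m0 by simp
    have ha: "a powr p = m powr p * (a/m) powr p" using mp assms
      by (simp add: powr_mult[symmetric])
    have hb: "b powr p = m powr p * (b/m) powr p" using mp assms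
      by (simp add: powr_mult[symmetric])
    have ta: "(a/m) powr p \<le> p * (a/m) + (1-p)" using tangent_powr[of "a/m" p] assms mp by simp
    have tb: "(b/m) powr p \<le> p * (b/m) + (1-p)" using tangent_powr[of "b/m" p] assms mp by simp
    have mpp: "m powr p > 0" using mp by simp
    have "t * (a/m) powr p + (1-t) * (b/m) powr p \<le> t * (p * (a/m) + (1-p)) + (1-t) * (p * (b/m) + (1-p))"
      using ta tb assms by (intro add_mono mult_left_mono) auto
    also have "\<dots> = p * ((t * a + (1 - t) * b) / m) + (1 - p)" using mp by (simp add: field_simps)
    also have "\<dots> = 1" using mp m_def by simp
    finally have "t * (a/m) powr p + (1-t) * (b/m) powr p \<le> 1" .
    then have "m powr p * (t * (a/m) powr p + (1-t) * (b/m) powr p) \<le> m powr p"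
      using mpp by (simp add: mult_left_le)
    then show ?thesis using ha hb unfolding m_def[symmetric] by (simp add: algebra_simps)
  qed
qed

lemma subadd_powr:
  fixes a b p :: real assumes "0 \<le> a" "0 \<le> b" "0 < p" "p \<le> 1"
  shows "(a + b) powr p \<le> a powr p + b powr p"
proof (cases "a + b = 0")
  case True then show ?thesis using assms by auto
next
  case False
  define m where "m = a + b"
  have mp: "m > 0" using False assms m_def by simp
  have ha: "a powr p = m powr p * (a/m) powr p" using mp assms
    by (simp add: powr_mult[symmetric])
  have hb: "b powr p = m powr p * (b/m) powr p" using mp assms
    by (simp add: powr_mult[symmetric])
  have le1: "a/m \<le> 1" "b/m \<le> 1" using mp assms m_def by auto
  have "a/m \<le> (a/m) powr p"
    using powr_mono2'[of p "a/m" 1] le1 assms mp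
    by (metis divide_nonneg_pos powr_le1 powr_one order_refl  less_eq_real_def powr_mono' zero_le_one )
  moreover have "b/m \<le> (b/m) powr p"
    by (metis assms(2) assms(4) divide_nonneg_pos le1(2) mp powr_mono' powr_one zero_le_one)
  moreover have "a/m + b/m = 1" using mp m_def by (simp add: add_divide_distrib[symmetric])
  ultimately have "1 \<le> (a/m) powr p + (b/m) powr p"
    by linarith
  then have "m powr p * 1 \<le> m powr p * ((a/m) powr p + (b/m) powr p)"
    using mp by (intro mult_left_mono) auto
  then show ?thesis using ha hb m_def by (simp add: algebra_simps)
qed

lemma pcD:
  assumes "p_convex p B" "x \<in> B" "y \<in> B" "0 \<le> a" "0 \<le> b" "a powr p + b powr p = 1"
  shows "a *\<^sub>R x + b *\<^sub>R y \<in> B"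
  using assms unfolding p_convex_def by blast

lemma pc_scale:
  fixes B :: "'a::real_vector set"
  assumes B: "p_convex p B" and "0 \<in> B" "x \<in> B" "0 \<le> r" "r \<le> 1" "0 < p"
  shows "r *\<^sub>R x \<in> B"
proof -
  define b where "b = (1 - r powr p) powr (1/p)"
  have "r powr p \<le> 1" using assms powr_mono2[of p r 1] by simp
  then have "b powr p = 1 - r powr p" unfolding b_def using assms by (simp add: powr_powr)
  moreover have "b \<ge> 0" unfolding b_def by simp
  ultimately have "r *\<^sub>R x + b *\<^sub>R 0 \<in> B"
    using pcD[OF B \<open>x \<in> B\<close> \<open>0 \<in> B\<close>, of r b] assms by simp
  then show ?thesis by simp
qed

lemma pc_comb:
  fixes B :: "'a::real_vector set"
  assumes B: "p_convex p B" and "0 \<in> B" "x \<in> B" "y \<in> B" "0 \<le> a" "0 \<le> b"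
    "a powr p + b powr p \<le> 1" "0 < p"
  shows "a *\<^sub>R x + b *\<^sub>R y \<in> B"
proof -
  define s where "s = a powr p + b powr p"
  define r where "r = s powr (1/p)"
  show ?thesis
  proof (cases "s = 0")
    case True
    then have "a powr p = 0" "b powr p = 0" using s_def powr_ge_zero[of a p] powr_ge_zero[of b p]
      by linarith+
    then have "a = 0" "b = 0" by simp_all
    then show ?thesis using assms by simp
  next
    case False
    have s0: "s > 0" using False s_def powr_ge_zero[of a p] powr_ge_zero[of b p] by linarith
    have r0: "r > 0" using s0 r_def by simp
    have rp: "r powr p = s" using s0 assms r_def by (simp add: powr_powr)
    have r1: "r \<le> 1" using r_def s_def assms s0 powr_mono2[of "1/p" s 1] by simp
    have "(a/r) powr p + (b/r) powr p = (a powr p + b powr p) / r powr p"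
      using assms r0 by (simp add: powr_divide add_divide_distrib)
    also have "\<dots> = 1" using rp s_def s0 by simp
    finally have "(a/r) *\<^sub>R x + (b/r) *\<^sub>R y \<in> B"
      using pcD[OF B \<open>x \<in> B\<close> \<open>y \<in> B\<close>, of "a/r" "b/r"] assms r0 by simp
    then have "r *\<^sub>R ((a/r) *\<^sub>R x + (b/r) *\<^sub>R y) \<in> B"
      using pc_scale[OF B] assms r0 r1 by simp
    then show ?thesis using r0 by (simp add: scaleR_add_right)
  qed
qed

lemma pc_sum:
  fixes B :: "'a::real_vector set"
  assumes B: "p_convex p B" and z: "0 \<in> B" and p: "0 < p" and I: "finite I"
  shows "(\<forall>i\<in>I. v i \<in> B) \<Longrightarrow> (\<forall>i\<in>I. 0 \<le> c i) \<Longrightarrow> (\<Sum>i\<in>I. c i powr p) \<le> 1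
     \<Longrightarrow> (\<Sum>i\<in>I. c i *\<^sub>R v i) \<in> B"
  using I
proof (induction I arbitrary: c rule: finite_induct)
  case empty
  then show ?case using z by simp
next
  case (insert j I)
  define s where "s = (\<Sum>i\<in>I. c i powr p)"
  have s0: "s \<ge> 0" unfolding s_def by (simp add: sum_nonneg)
  have sj: "c j powr p + s \<le> 1" using insert s_def by simp
  show ?case
  proof (cases "s = 0")
    case True
    then have "\<forall>i\<in>I. c i powr p = 0" using s_def insert(1)
      by (simp add: sum_nonneg_eq_0_iff)
    then have "\<forall>i\<in>I. c i = 0" by simp
    then have "(\<Sum>i\<in>insert j I. c i *\<^sub>R v i) = c j *\<^sub>R v j + 0 *\<^sub>R 0"
      using insert by simp
    moreover have "c j *\<^sub>R v j + 0 *\<^sub>R 0 \<in> B"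
      using pc_comb[OF B z, of "v j" 0 "c j" 0] insert z p sj True by simp
    ultimately show ?thesis by simp
  next
    case False
    have sp: "s > 0" using False s0 by simp
    define r where "r = s powr (1/p)"
    have r0: "r > 0" using sp r_def by simp
    have rp: "r powr p = s" using sp p r_def by (simp add: powr_powr)
    have "(\<Sum>i\<in>I. (c i / r) powr p) = (\<Sum>i\<in>I. c i powr p) / r powr p"
      using insert r0 by (simp add: powr_divide sum_divide_distrib)
    also have "\<dots> = 1" using rp s_def sp by simp
    finally have w: "(\<Sum>i\<in>I. (c i / r) *\<^sub>R v i) \<in> B"
      using insert.IH[of "\<lambda>i. c i / r"] insert.prems r0 by simp
    have "c j *\<^sub>R v j + r *\<^sub>R (\<Sum>i\<in>I. (c i / r) *\<^sub>R v i) \<in> B"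
      using pc_comb[OF B z _ w, of "v j" "c j" r] insert.prems rp sj p r0 by simp
    moreover have "r *\<^sub>R (\<Sum>i\<in>I. (c i / r) *\<^sub>R v i) = (\<Sum>i\<in>I. c i *\<^sub>R v i)"
      using r0 by (simp add: scaleR_sum_right)
    ultimately show ?thesis using insert by simp
  qed
qed

lemma hull_char:
  fixes P :: "'i::finite \<Rightarrow> 'a::real_vector" and p :: real
  assumes p: "0 < p" "p \<le> 1" and M: "M \<in> p_conv p (insert 0 (insert Q (range P)))"
  shows "\<exists>c d. (\<forall>i. 0 \<le> c i) \<and> 0 \<le> d \<and> (\<Sum>i\<in>UNIV. c i powr p) + d powr p \<le> 1 \<and>
      M = (\<Sum>i\<in>UNIV. c i *\<^sub>R P i) + d *\<^sub>R Q"
proof -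
  define S where "S = {M. \<exists>c d. (\<forall>i. 0 \<le> c i) \<and> 0 \<le> d \<and> (\<Sum>i\<in>UNIV. c i powr p) + d powr p \<le> 1 \<and>
      M = (\<Sum>i\<in>UNIV. c i *\<^sub>R P i) + d *\<^sub>R Q}"
  have "0 \<in> S" unfolding S_def
    by (rule CollectI, rule exI[of _ "\<lambda>_. 0"], rule exI[of _ 0]) simp
  moreover have "Q \<in> S" unfolding S_def
    by (rule CollectI, rule exI[of _ "\<lambda>_. 0"], rule exI[of _ 1]) simp
  moreover have "P k \<in> S" for k
  proof -
    have "(\<Sum>i\<in>UNIV. (if i = k then 1 else 0) powr p) = (\<Sum>i\<in>UNIV. if i = k then 1 else (0::real))"
      by (rule sum.cong) auto
    then have "(\<Sum>i\<in>UNIV. (if i = k then 1 else 0) powr p) = (1::real)" by simp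
    moreover have "(\<Sum>i\<in>UNIV. (if i = k then 1 else 0) *\<^sub>R P i) = (\<Sum>i\<in>UNIV. if i = k then P i else 0)"
      by (rule sum.cong) auto
    then have "(\<Sum>i\<in>UNIV. (if i = k then 1 else 0) *\<^sub>R P i) = P k" by simp
    ultimately show ?thesis unfolding S_def
      by (intro CollectI exI[of _ "\<lambda>i. if i = k then 1 else 0"] exI[of _ 0]) simp
  qed
  moreover have "p_convex p S"
    unfolding p_convex_def
  proof (intro ballI allI impI)
    fix x y a b assume x: "x \<in> S" and y: "y \<in> S" and ab: "0 \<le> a \<and> 0 \<le> b \<and> a powr p + b powr p = 1"
    obtain c d where cd: "\<forall>i. 0 \<le> c i" "0 \<le> d" "(\<Sum>i\<in>UNIV. c i powr p) + d powr p \<le> 1"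
      "x = (\<Sum>i\<in>UNIV. c i *\<^sub>R P i) + d *\<^sub>R Q" using x unfolding S_def by blast
    obtain c' d' where cd': "\<forall>i. 0 \<le> c' i" "0 \<le> d'" "(\<Sum>i\<in>UNIV. c' i powr p) + d' powr p \<le> 1"
      "y = (\<Sum>i\<in>UNIV. c' i *\<^sub>R P i) + d' *\<^sub>R Q" using y unfolding S_def by blast
    define e where "e i = a * c i + b * c' i" for i
    define f where "f = a * d + b * d'"
    have e0: "\<forall>i. 0 \<le> e i" using cd cd' ab unfolding e_def by simp
    have f0: "0 \<le> f" using cd cd' ab unfolding f_def by simp
    have ei: "e i powr p \<le> a powr p * c i powr p + b powr p * c' i powr p" for i
      using subadd_powr[of "a * c i" "b * c' i" p] cd cd' ab p unfolding e_def
      by (simp add: powr_mult)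
    have fi: "f powr p \<le> a powr p * d powr p + b powr p * d' powr p"
      using subadd_powr[of "a * d" "b * d'" p] cd cd' ab p unfolding f_def
      by (simp add: powr_mult)
    have "(\<Sum>i\<in>UNIV. e i powr p) + f powr p \<le>
       (\<Sum>i\<in>UNIV. a powr p * c i powr p + b powr p * c' i powr p) + (a powr p * d powr p + b powr p * d' powr p)"
      using ei fi by (intro add_mono sum_mono) auto
    also have "\<dots> = a powr p * ((\<Sum>i\<in>UNIV. c i powr p) + d powr p) + b powr p * ((\<Sum>i\<in>UNIV. c' i powr p) + d' powr p)"
      by (simp add: sum.distrib sum_distrib_left algebra_simps)
    also have "\<dots> \<le> a powr p * 1 + b powr p * 1"
      using cd cd' by (intro add_mono mult_left_mono) auto
    also have "\<dots> = 1" using ab by simp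
    finally have le: "(\<Sum>i\<in>UNIV. e i powr p) + f powr p \<le> 1" .
    have "a *\<^sub>R x + b *\<^sub>R y = (\<Sum>i\<in>UNIV. e i *\<^sub>R P i) + f *\<^sub>R Q"
      unfolding cd(4) cd'(4) e_def f_def
      by (simp add: scaleR_add_right scaleR_add_left scaleR_sum_right sum.distrib algebra_simps)
    then show "a *\<^sub>R x + b *\<^sub>R y \<in> S" unfolding S_def using e0 f0 le by blast
  qed
  ultimately have "p_conv p (insert 0 (insert Q (range P))) \<subseteq> S"
    unfolding p_conv_def by blast
  then show ?thesis using M unfolding S_def by blast
qed

lemma hull_mem:
  fixes R :: "'i::finite \<Rightarrow> 'a::real_vector" and p :: real
  assumes p: "0 < p" and c: "\<forall>i. 0 \<le> c i" "(\<Sum>i\<in>UNIV. c i powr p) \<le> 1"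
  shows "(\<Sum>i\<in>UNIV. c i *\<^sub>R R i) \<in> p_conv p (insert 0 (range R))"
  unfolding p_conv_def
proof (rule InterI)
  fix B assume "B \<in> {B. p_convex p B \<and> insert 0 (range R) \<subseteq> B}"
  then have B: "p_convex p B" "0 \<in> B" "\<forall>i\<in>UNIV. R i \<in> B" by auto
  show "(\<Sum>i\<in>UNIV. c i *\<^sub>R R i) \<in> B"
    using pc_sum[OF B(1) B(2) p, of UNIV R c] B c by simp
qed

theorem lemma4:
  fixes p :: real and P :: "'n::finite \<Rightarrow> real ^ 'n" and Q M :: "real ^ 'n"
  assumes "0 < p" and "p < 1"
    and "inj P" and "independent (range P)"
    and "M \<in> p_conv p (insert 0 (insert Q (range P)))"
  shows "\<exists>R :: 'n \<Rightarrow> real ^ 'n. (\<forall>k. R k \<in> insert Q (range P)) \<and>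
           M \<in> p_conv p (insert 0 (range R))"
proof -
  have p0: "0 < p" and p1: "p \<le> 1" using assms by auto
  obtain c d where c0: "\<forall>i. 0 \<le> c i" and d0: "0 \<le> d"
    and cd1: "(\<Sum>i\<in>UNIV. c i powr p) + d powr p \<le> 1"
    and Mcd: "M = (\<Sum>i\<in>UNIV. c i *\<^sub>R P i) + d *\<^sub>R Q"
    using hull_char[OF p0 p1 assms(5)] by blast
  have "card (range P) = CARD('n)" using assms(3) by (simp add: card_image)
  then have "UNIV \<subseteq> span (range P)"
    using card_ge_dim_independent[of "range P" UNIV] assms(4) by simp
  then have "Q \<in> span (range P)" by blast
  then obtain u where "(\<Sum>v\<in>range P. u v *\<^sub>R v) = Q"
    using span_finite[of "range P"] by auto
  then have "(\<Sum>i\<in>UNIV. u (P i) *\<^sub>R P i) = Q"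
    using assms(3) by (simp add: sum.reindex)
  then obtain q where Qq: "Q = (\<Sum>i\<in>UNIV. q i *\<^sub>R P i)" by metis
  define co where "co t i = c i - t * q i" for t i
  define dc where "dc t = d + t" for t
  define f where "f t = (\<Sum>i\<in>UNIV. co t i powr p) + dc t powr p" for t
  have Mt: "M = (\<Sum>i\<in>UNIV. co t i *\<^sub>R P i) + dc t *\<^sub>R Q" for t
  proof -
    have "(\<Sum>i\<in>UNIV. co t i *\<^sub>R P i) = (\<Sum>i\<in>UNIV. c i *\<^sub>R P i) - t *\<^sub>R Q"
      unfolding co_def Qq by (simp add: scaleR_diff_left sum_subtractf scaleR_sum_right)
    then show ?thesis unfolding Mcd dc_def by (simp add: scaleR_add_left)
  qed
  have finish: "\<exists>R :: 'n \<Rightarrow> real ^ 'n. (\<forall>k. R k \<in> insert Q (range P)) \<and>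
           M \<in> p_conv p (insert 0 (range R))"
    if t0: "\<forall>i. 0 \<le> co t i" "0 \<le> dc t" "f t \<le> 1" and z: "dc t = 0 \<or> (\<exists>j. co t j = 0)" for t
    using z
  proof
    assume dz: "dc t = 0"
    have "(\<Sum>i\<in>UNIV. co t i powr p) \<le> 1" using t0 dz unfolding f_def by simp
    then have "(\<Sum>i\<in>UNIV. co t i *\<^sub>R P i) \<in> p_conv p (insert 0 (range P))"
      using hull_mem[OF p0] t0 by blast
    then show ?thesis using Mt[of t] dz by (intro exI[of _ P]) auto
  next
    assume "\<exists>j. co t j = 0"
    then obtain j where j: "co t j = 0" by blast
    define R where "R = P(j := Q)"
    define e where "e = (co t)(j := dc t)"
    have e0: "\<forall>i. 0 \<le> e i" using t0 unfolding e_def by simp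
    have s1: "(\<Sum>i\<in>UNIV. e i powr p) = (\<Sum>i\<in>UNIV. co t i powr p) + dc t powr p"
    proof -
      have "(\<Sum>i\<in>UNIV. e i powr p) = e j powr p + (\<Sum>i\<in>UNIV - {j}. e i powr p)"
        by (simp add: sum.remove)
      moreover have "(\<Sum>i\<in>UNIV. co t i powr p) = co t j powr p + (\<Sum>i\<in>UNIV - {j}. co t i powr p)"
        by (simp add: sum.remove)
      moreover have "(\<Sum>i\<in>UNIV - {j}. e i powr p) = (\<Sum>i\<in>UNIV - {j}. co t i powr p)"
        unfolding e_def by (rule sum.cong) auto
      ultimately show ?thesis using j unfolding e_def by simp
    qed
    have s2: "(\<Sum>i\<in>UNIV. e i *\<^sub>R R i) = (\<Sum>i\<in>UNIV. co t i *\<^sub>R P i) + dc t *\<^sub>R Q"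
    proof -
      have "(\<Sum>i\<in>UNIV. e i *\<^sub>R R i) = e j *\<^sub>R R j + (\<Sum>i\<in>UNIV - {j}. e i *\<^sub>R R i)"
        by (simp add: sum.remove)
      moreover have "(\<Sum>i\<in>UNIV. co t i *\<^sub>R P i) = co t j *\<^sub>R P j + (\<Sum>i\<in>UNIV - {j}. co t i *\<^sub>R P i)"
        by (simp add: sum.remove)
      moreover have "(\<Sum>i\<in>UNIV - {j}. e i *\<^sub>R R i) = (\<Sum>i\<in>UNIV - {j}. co t i *\<^sub>R P i)"
        unfolding e_def R_def by (rule sum.cong) auto
      ultimately show ?thesis using j unfolding e_def R_def by simp
    qed
    have "(\<Sum>i\<in>UNIV. e i powr p) \<le> 1" using s1 t0 unfolding f_def by simp
    then have "(\<Sum>i\<in>UNIV. e i *\<^sub>R R i) \<in> p_conv p (insert 0 (range R))"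
      using hull_mem[OF p0] e0 by blast
    moreover have "\<forall>k. R k \<in> insert Q (range P)" unfolding R_def by simp
    ultimately show ?thesis using s2 Mt[of t] by auto
  qed
  define L where "L = (\<lambda>i. c i / q i) ` {i. q i < 0}"
  define U where "U = (\<lambda>i. c i / q i) ` {i. q i > 0}"
  define t0 where "t0 = Max (insert (-d) L)"
  define t1 where "t1 = (if U = {} then 2 else Min U)"
  have finL: "finite L" and finU: "finite U" unfolding L_def U_def by auto
  have t0ge: "-d \<le> t0" "\<forall>x\<in>L. x \<le> t0" unfolding t0_def using finL by auto
  have t0in: "t0 \<in> insert (-d) L" unfolding t0_def using finL by (intro Max_in) auto
  have Lnp: "\<forall>x\<in>L. x \<le> 0" unfolding L_def using c0
    by (auto intro: divide_nonneg_neg)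
  have t0le: "t0 \<le> 0" using t0in Lnp d0 by auto
  have co0: "\<forall>i. 0 \<le> co t0 i"
  proof
    fix i show "0 \<le> co t0 i"
    proof (cases "q i < 0")
      case True
      then have "c i / q i \<le> t0" using t0ge unfolding L_def by auto
      then have "t0 * q i \<le> c i" using True by (simp add: divide_le_eq)
      then show ?thesis unfolding co_def by simp
    next
      case False
      then have "t0 * q i \<le> 0" using t0le by (simp add: mult_nonpos_nonneg)
      then show ?thesis unfolding co_def using c0 by (smt (verit))
    qed
  qed
  have dc0: "0 \<le> dc t0" unfolding dc_def using t0ge by simp
  have z0: "dc t0 = 0 \<or> (\<exists>j. co t0 j = 0)"
  proof (cases "t0 = -d")
    case True then show ?thesis unfolding dc_def by simp
  next
    case False
    then obtain j where "q j < 0" "t0 = c j / q j" using t0in unfolding L_def by auto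
    then have "co t0 j = 0" unfolding co_def by simp
    then show ?thesis by blast
  qed
  have t1ge: "0 \<le> t1" unfolding t1_def U_def using c0 finU
    by (auto simp: U_def intro!: Min.boundedI)
  have co1: "\<forall>i. 0 \<le> co t1 i"
  proof
    fix i show "0 \<le> co t1 i"
    proof (cases "q i > 0")
      case True
      then have "U \<noteq> {}" unfolding U_def by auto
      moreover have "c i / q i \<in> U" using True unfolding U_def by auto
      ultimately have "t1 \<le> c i / q i" unfolding t1_def using finU by auto
      then have "t1 * q i \<le> c i" using True by (simp add: le_divide_eq)
      then show ?thesis unfolding co_def by simp
    next
      case False
      then have "t1 * q i \<le> 0" using t1ge by (simp add: mult_nonneg_nonpos)
      then show ?thesis unfolding co_def using c0 by (smt (verit))
    qed
  qed
  have dc1: "0 \<le> dc t1" unfolding dc_def using t1ge d0 by simp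
  have fge: "dc t powr p \<le> f t" for t unfolding f_def by (simp add: sum_nonneg)
  have f0: "f 0 \<le> 1" unfolding f_def co_def dc_def using cd1 by simp
  have "f t0 \<le> 1 \<or> f t1 \<le> 1"
  proof (cases "t0 = 0")
    case True then show ?thesis using f0 by simp
  next
    case False
    then have t0n: "t0 < 0" using t0le by simp
    define th where "th = t1 / (t1 - t0)"
    have den: "t1 - t0 > 0" using t0n t1ge by simp
    have th0: "0 \<le> th" "th < 1" unfolding th_def using den t0n t1ge by (auto simp: divide_less_eq)
    have comb: "th * t0 + (1 - th) * t1 = 0"
    proof -
      have "1 - th = - t0 / (t1 - t0)" unfolding th_def using den by (simp add: field_simps)
      then show ?thesis unfolding th_def using den by (simp add: field_simps)
    qed
    have ci: "th * co t0 i + (1 - th) * co t1 i = c i" for i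
    proof -
      have "th * co t0 i + (1 - th) * co t1 i = c i - (th * t0 + (1 - th) * t1) * q i"
        unfolding co_def by (simp add: algebra_simps)
      then show ?thesis using comb by simp
    qed
    have di: "th * dc t0 + (1 - th) * dc t1 = d"
    proof -
      have "th * dc t0 + (1 - th) * dc t1 = d + (th * t0 + (1 - th) * t1)"
        unfolding dc_def by (simp add: algebra_simps)
      then show ?thesis using comb by simp
    qed
    have "th * f t0 + (1 - th) * f t1 =
        (\<Sum>i\<in>UNIV. th * co t0 i powr p + (1 - th) * co t1 i powr p) + (th * dc t0 powr p + (1 - th) * dc t1 powr p)"
      unfolding f_def sum.distrib sum_distrib_left[symmetric] by (simp add: algebra_simps)
    also have "\<dots> \<le> (\<Sum>i\<in>UNIV. c i powr p) + d powr p"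
      using concave_powr[of _ _ th p] co0 co1 dc0 dc1 th0 p0 p1 ci di
      by (intro add_mono sum_mono) (metis less_eq_real_def)+
    also have "\<dots> \<le> 1" using cd1 .
    finally have main: "th * f t0 + (1 - th) * f t1 \<le> 1" .
    show ?thesis
    proof (rule ccontr)
      assume "\<not> ?thesis"
      then have a: "f t0 > 1" "f t1 > 1" by auto
      have "th * 1 \<le> th * f t0" using a th0 by (intro mult_left_mono) auto
      moreover have "(1 - th) * 1 < (1 - th) * f t1" using a th0 by (intro mult_strict_left_mono) auto
      ultimately show False using main by simp
    qed
  qed
  then show ?thesis
  proof
    assume "f t0 \<le> 1" then show ?thesis using finish[of t0] co0 dc0 z0 by blast
  next
    assume f1: "f t1 \<le> 1"
    show ?thesis
    proof (cases "U = {}")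
      case True
      then have "t1 = 2" unfolding t1_def by simp
      then have "1 < dc t1" unfolding dc_def using d0 by simp
      then have "1 < dc t1 powr p" using p0 by (simp add: gr_one_powr)
      then show ?thesis using fge[of t1] f1 by simp
    next
      case False
      then have "t1 \<in> U" unfolding t1_def using finU by simp
      then obtain j where "q j > 0" "t1 = c j / q j" unfolding U_def by auto
      then have "co t1 j = 0" unfolding co_def by simp
      then show ?thesis using finish[of t1] co1 dc1 f1 by blast
    qed
  qed
qed

end
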